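(* Let $(X,\mathcal{O}(X))$ be a measurable space, $\mathcal{A}$ a unital $C^*$-algebra and $\mathcal{H}$ a Hilbert space with $\dim\mathcal{H}<\infty$. Then every $C^*$-extreme point of $I_{\mathcal{H}}(X,\mathcal{A})$ is an extreme point of the convex set $I_{\mathcal{H}}(X,\mathcal{A})$.
   Context: A CP instrument is a map $\mathcal{I}$ from $\mathcal{O}(X)$ to the completely positive maps $\mathcal{A}\to\mathcal{B}(\mathcal{H})$ such that for all $a\in\mathcal{A}$, $h,k\in\mathcal{H}$, $A\mapsto\langle h,\mathcal{I}(A)(a)k\rangle$ is a countably additive complex measure. It is UCP if $\mathcal{I}(X)(1_\mathcal{A})=I_\mathcal{H}$; $I_{\mathcal{H}}(X,\mathcal{A})$ is the (convex) set of UCP instruments. A $C^*$-convex combination of $\mathcal{I}$ is $\mathcal{I}(\cdot)=\sum_{i=1}^nT_i^*\mathcal{I}_i(\cdot)T_i$ with $\mathcal{I}_i\in I_{\mathcal{H}}(X,\mathcal{A})$, $T_i\in\mathcal{B}(\mathcal{H})$, $\sum T_i^*T_i=I_\mathcal{H}$; proper if all $T_i$ are invertible. $\mathcal{I}\in I_{\mathcal{H}}(X,\mathcal{A})$ is $C^*$-extreme if for every proper $C^*$-convex combination of $\mathcal{I}$ there are unitaries $U_i\in\mathcal{B}(\mathcal{H})$ with $\mathcal{I}_i(\cdot)=U_i^*\mathcal{I}(\cdot)U_i$ for all $i$. *)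

theory Defs
  imports "HOL-Analysis.Analysis"
begin

text \<open>Complex scalar multiplication is a
  parameter (HOL-Analysis has no complex vector space class), compatible with
  the real scalar multiplication.\<close>

class unital_cstar_algebra = real_normed_algebra_1 + banach +
  fixes scaleC :: "complex \<Rightarrow> 'a \<Rightarrow> 'a"
    and star :: "'a \<Rightarrow> 'a"
  assumes scaleC_add_right: "scaleC c (x + y) = scaleC c x + scaleC c y"
    and scaleC_add_left: "scaleC (b + c) x = scaleC b x + scaleC c x"
    and scaleC_scaleC: "scaleC b (scaleC c x) = scaleC (b * c) x"
    and scaleC_one: "scaleC 1 x = x"
    and scaleC_of_real: "scaleC (of_real r) x = scaleR r x"
    and norm_scaleC: "norm (scaleC c x) = cmod c * norm x"
    and scaleC_mult_left: "scaleC c x * y = scaleC c (x * y)"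
    and scaleC_mult_right: "x * scaleC c y = scaleC c (x * y)"
    and star_star: "star (star x) = x"
    and star_add: "star (x + y) = star x + star y"
    and star_scaleC: "star (scaleC c x) = scaleC (cnj c) (star x)"
    and star_mult: "star (x * y) = star y * star x"
    and cstar_identity: "norm (star x * x) = (norm x)\<^sup>2"

definition cinner :: "complex^'n \<Rightarrow> complex^'n \<Rightarrow> complex" where
  "cinner h k = (\<Sum>i\<in>UNIV. cnj (h $ i) * k $ i)"

definition adj :: "complex^'n^'m \<Rightarrow> complex^'m^'n" where
  "adj T = (\<chi> i j. cnj (T $ j $ i))"

definition cmat_scale :: "complex \<Rightarrow> complex^'n^'m \<Rightarrow> complex^'n^'m" where
  "cmat_scale c T = (\<chi> i j. c * T $ i $ j)"

definition invertible_op :: "complex^'n^'n \<Rightarrow> bool" where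
  "invertible_op T \<longleftrightarrow> (\<exists>S. T ** S = mat 1 \<and> S ** T = mat 1)"

definition unitary_op :: "complex^'n^'n \<Rightarrow> bool" where
  "unitary_op U \<longleftrightarrow> adj U ** U = mat 1 \<and> U ** adj U = mat 1"

definition clinear_map :: "('a::unital_cstar_algebra \<Rightarrow> complex^'n^'n) \<Rightarrow> bool" where
  "clinear_map \<phi> \<longleftrightarrow> (\<forall>x y. \<phi> (x + y) = \<phi> x + \<phi> y) \<and>
                      (\<forall>c x. \<phi> (scaleC c x) = cmat_scale c (\<phi> x))"

text \<open>Complete positivity: for every k, the k-th amplification maps positive
  elements of M_k(A), i.e. elements of the form B*B with B in M_k(A), to positive
  (semidefinite) elements of M_k(B(H)) = B(H^k).\<close>

definition completely_positive :: "('a::unital_cstar_algebra \<Rightarrow> complex^'n^'n) \<Rightarrow> bool" where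
  "completely_positive \<phi> \<longleftrightarrow> clinear_map \<phi> \<and>
     (\<forall>(k::nat) (b::nat \<Rightarrow> nat \<Rightarrow> 'a) (h::nat \<Rightarrow> complex^'n).
        let q = (\<Sum>i<k. \<Sum>j<k. cinner (h i) (\<phi> (\<Sum>l<k. star (b l i) * b l j) *v h j))
        in Im q = 0 \<and> Re q \<ge> 0)"

definition countably_additive_cmeasure :: "'x measure \<Rightarrow> ('x set \<Rightarrow> complex) \<Rightarrow> bool" where
  "countably_additive_cmeasure M \<mu> \<longleftrightarrow>
     (\<forall>F::nat \<Rightarrow> 'x set. range F \<subseteq> sets M \<longrightarrow> disjoint_family F \<longrightarrow>
        (\<lambda>i. \<mu> (F i)) sums \<mu> (\<Union>i. F i))"

text \<open>A CP instrument is a map on the measurable sets O(X) = sets M; outside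
  sets M we fix the (irrelevant) value 0 so that instruments are determined by
  their values on O(X).\<close>

definition cp_instrument ::
  "'x measure \<Rightarrow> ('x set \<Rightarrow> 'a::unital_cstar_algebra \<Rightarrow> complex^'n^'n) \<Rightarrow> bool" where
  "cp_instrument M I \<longleftrightarrow>
     (\<forall>A\<in>sets M. completely_positive (I A)) \<and>
     (\<forall>A. A \<notin> sets M \<longrightarrow> I A = (\<lambda>_. 0)) \<and>
     (\<forall>a h k. countably_additive_cmeasure M (\<lambda>A. cinner h (I A a *v k)))"

definition ucp_instruments ::
  "'x measure \<Rightarrow> ('x set \<Rightarrow> 'a::unital_cstar_algebra \<Rightarrow> complex^'n^'n) set" where
  "ucp_instruments M = {I. cp_instrument M I \<and> I (space M) 1 = mat 1}"

definition proper_cstar_convex_comb ::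
  "'x measure \<Rightarrow> ('x set \<Rightarrow> 'a::unital_cstar_algebra \<Rightarrow> complex^'n^'n) \<Rightarrow> nat \<Rightarrow>
   (nat \<Rightarrow> 'x set \<Rightarrow> 'a \<Rightarrow> complex^'n^'n) \<Rightarrow> (nat \<Rightarrow> complex^'n^'n) \<Rightarrow> bool" where
  "proper_cstar_convex_comb M I m Is T \<longleftrightarrow>
     (\<forall>i<m. Is i \<in> ucp_instruments M \<and> invertible_op (T i)) \<and>
     (\<Sum>i<m. adj (T i) ** T i) = mat 1 \<and>
     (\<forall>A a. I A a = (\<Sum>i<m. adj (T i) ** Is i A a ** T i))"

definition cstar_extreme ::
  "'x measure \<Rightarrow> ('x set \<Rightarrow> 'a::unital_cstar_algebra \<Rightarrow> complex^'n^'n) \<Rightarrow> bool" where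
  "cstar_extreme M I \<longleftrightarrow> I \<in> ucp_instruments M \<and>
     (\<forall>m Is T. proper_cstar_convex_comb M I m Is T \<longrightarrow>
        (\<exists>U. \<forall>i<m. unitary_op (U i) \<and> (\<forall>A a. Is i A a = adj (U i) ** I A a ** U i)))"

definition extreme_instrument ::
  "('x set \<Rightarrow> 'a \<Rightarrow> complex^'n^'n) set \<Rightarrow> ('x set \<Rightarrow> 'a \<Rightarrow> complex^'n^'n) \<Rightarrow> bool" where
  "extreme_instrument S I \<longleftrightarrow> I \<in> S \<and>
     (\<forall>I1\<in>S. \<forall>I2\<in>S. \<forall>t::real. 0 < t \<and> t < 1 \<and>
        (\<forall>A a. I A a = t *\<^sub>R I1 A a + (1 - t) *\<^sub>R I2 A a) \<longrightarrow> I1 = I \<and> I2 = I)"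

end

theory Submission
  imports Defs
begin

lemma adj_mult: "adj ((A::complex^'n::finite^'n) ** B) = adj B ** adj A"
  by (simp add: adj_def matrix_matrix_mult_def vec_eq_iff mult.commute)

lemma norm_sq_trace: "(norm (X::complex^'n::finite^'n))^2 = Re (trace (adj X ** X))"
proof -
  have "(norm X)^2 = (\<Sum>i\<in>UNIV. (norm (X$i))^2)"
    by (simp add: norm_vec_def L2_set_def sum_nonneg)
  also have "\<dots> = (\<Sum>i\<in>UNIV. \<Sum>j\<in>UNIV. (cmod (X$i$j))^2)"
    by (simp add: norm_vec_def L2_set_def sum_nonneg)
  also have "\<dots> = (\<Sum>j\<in>UNIV. \<Sum>i\<in>UNIV. (cmod (X$i$j))^2)"
    by (rule sum.swap)
  also have "\<dots> = Re (trace (adj X ** X))"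
  proof -
    have e: "\<And>z. (cmod z)^2 = Re (cnj z * z)" by (simp only: cmod_power2) (simp add: power2_eq_square)
    show ?thesis by (simp only: e) (simp add: trace_def adj_def matrix_matrix_mult_def Re_sum)
  qed
  finally show ?thesis .
qed

lemma unitary_norm:
  assumes "unitary_op (U::complex^'n::finite^'n)"
  shows "norm (adj U ** X ** U) = norm X"
proof -
  have aa: "adj (adj U) = U" by (simp add: adj_def vec_eq_iff)
  have "adj (adj U ** X ** U) ** (adj U ** X ** U) = adj U ** (adj X ** X) ** U"
    using assms unfolding unitary_op_def
    by (simp add: adj_mult aa matrix_mul_assoc)
       (metis matrix_mul_assoc matrix_mul_lid)
  hence "trace (adj (adj U ** X ** U) ** (adj U ** X ** U)) = trace (adj X ** X)"
    using assms unfolding unitary_op_def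
    by (metis matrix_mul_assoc matrix_mul_rid trace_mul_sym)
  hence "(norm (adj U ** X ** U))^2 = (norm X)^2" by (simp add: norm_sq_trace)
  thus ?thesis by (simp add: power2_eq_iff_nonneg)
qed

lemma mat_left: "mat c ** (X::complex^'n::finite^'n) = (\<chi> i j. c * X$i$j)"
proof -
  have "\<And>i j. (\<Sum>k\<in>UNIV. (mat c :: complex^'n^'n)$i$k * X$k$j) = c * X$i$j"
  proof -
    fix i j
    have "(\<Sum>k\<in>UNIV. (mat c :: complex^'n^'n)$i$k * X$k$j) = (\<Sum>k\<in>UNIV. if k = i then c * X$k$j else 0)"
      by (rule sum.cong) (auto simp: mat_def)
    thus "(\<Sum>k\<in>UNIV. (mat c :: complex^'n^'n)$i$k * X$k$j) = c * X$i$j" by simp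
  qed
  thus ?thesis by (simp add: matrix_matrix_mult_def vec_eq_iff)
qed

lemma mat_right: "(X::complex^'n::finite^'n) ** mat c = (\<chi> i j. c * X$i$j)"
proof -
  have "\<And>i j. (\<Sum>k\<in>UNIV. X$i$k * (mat c :: complex^'n^'n)$k$j) = c * X$i$j"
  proof -
    fix i j
    have "(\<Sum>k\<in>UNIV. X$i$k * (mat c :: complex^'n^'n)$k$j) = (\<Sum>k\<in>UNIV. if k = j then c * X$i$k else 0)"
      by (rule sum.cong) (auto simp: mat_def)
    thus "(\<Sum>k\<in>UNIV. X$i$k * (mat c :: complex^'n^'n)$k$j) = c * X$i$j" by simp
  qed
  thus ?thesis by (simp add: matrix_matrix_mult_def vec_eq_iff)
qed

lemma adj_mat: "adj (mat c :: complex^'n::finite^'n) = mat (cnj c)"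
  by (simp add: adj_def mat_def vec_eq_iff)

lemma mat_sandwich: "adj (mat c) ** (X::complex^'n::finite^'n) ** mat c = (\<chi> i j. (cnj c * c) * X$i$j)"
  by (simp add: adj_mat mat_left mat_right vec_eq_iff mult.assoc)

lemma convex_id:
  fixes x y :: "'v::real_inner"
  shows "(norm (t *\<^sub>R x + (1 - t) *\<^sub>R y))^2 =
     t * (norm x)^2 + (1 - t) * (norm y)^2 - t * (1 - t) * (norm (x - y))^2"
  by (simp add: power2_norm_eq_inner inner_add_left inner_add_right inner_diff_left
      inner_diff_right inner_commute algebra_simps)

lemma strict_conv:
  fixes x y :: "'v::real_inner"
  assumes "norm x = r" "norm y = r" "norm (t *\<^sub>R x + (1 - t) *\<^sub>R y) = r" "0 < t" "t < 1"
  shows "x = y"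
proof -
  have "r^2 = t * r^2 + (1 - t) * r^2 - t * (1 - t) * (norm (x - y))^2"
    using convex_id[of t x y] assms by simp
  hence "t * (1 - t) * (norm (x - y))^2 = 0" by (simp add: algebra_simps)
  thus ?thesis using assms by simp
qed

lemma mat_mat: "mat c ** (mat d :: complex^'n::finite^'n) = mat (c * d)"
  by (subst mat_left) (simp add: mat_def vec_eq_iff)

lemma inv_mat: "c \<noteq> 0 \<Longrightarrow> invertible_op (mat c :: complex^'n::finite^'n)"
  unfolding invertible_op_def
  by (rule exI[of _ "mat (1/c)"]) (simp add: mat_mat)

theorem theorem3p17:
  fixes M :: "'x measure"
    and I :: "'x set \<Rightarrow> 'a::unital_cstar_algebra \<Rightarrow> complex^'n::finite^'n"
  assumes "cstar_extreme M I"
  shows "extreme_instrument (ucp_instruments M) I"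
  unfolding extreme_instrument_def
proof (intro conjI ballI allI impI)
  show "I \<in> ucp_instruments M" using assms by (simp add: cstar_extreme_def)
  fix I1 I2 t
  assume I1: "I1 \<in> ucp_instruments M" and I2: "I2 \<in> ucp_instruments M"
    and H: "0 < t \<and> t < 1 \<and> (\<forall>A a. I A a = t *\<^sub>R I1 A a + (1 - t) *\<^sub>R I2 A a)"
  hence t0: "0 < t" and t1: "t < 1" and dec: "\<And>A a. I A a = t *\<^sub>R I1 A a + (1 - t) *\<^sub>R I2 A a"
    by auto
  define T :: "nat \<Rightarrow> complex^'n^'n" where
    "T = (\<lambda>i. if i = 0 then mat (complex_of_real (sqrt t)) else mat (complex_of_real (sqrt (1 - t))))"
  define Is where "Is = (\<lambda>i::nat. if i = 0 then I1 else I2)"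
  have sq1: "cnj (complex_of_real (sqrt t)) * complex_of_real (sqrt t) = complex_of_real t"
    using t0 by (simp flip: of_real_mult)
  have sq2: "cnj (complex_of_real (sqrt (1 - t))) * complex_of_real (sqrt (1 - t)) = complex_of_real (1 - t)"
    using t1 by (simp flip: of_real_mult)
  have "proper_cstar_convex_comb M I 2 Is T"
    unfolding proper_cstar_convex_comb_def
  proof (intro conjI allI impI)
    fix i :: nat assume "i < 2"
    show "Is i \<in> ucp_instruments M" using I1 I2 by (simp add: Is_def)
    show "invertible_op (T i)" using t0 t1 by (auto simp: T_def intro!: inv_mat)
  next
    show "(\<Sum>i<2. adj (T i) ** T i) = mat 1"
      using sq1 sq2 by (simp add: T_def adj_mat mat_mat numeral_2_eq_2) (simp add: mat_def vec_eq_iff)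
  next
    fix A a
    show "I A a = (\<Sum>i<2. adj (T i) ** Is i A a ** T i)"
      using sq1 sq2
      by (simp add: dec T_def Is_def mat_sandwich numeral_2_eq_2 vec_eq_iff) (simp add: scaleR_conv_of_real)
  qed
  then obtain U where U: "\<And>i. i < 2 \<Longrightarrow> unitary_op (U i) \<and> (\<forall>A a. Is i A a = adj (U i) ** I A a ** U i)"
    using assms unfolding cstar_extreme_def by blast
  have eq: "I1 A a = I2 A a" for A a
  proof (rule strict_conv[OF _ _ _ t0 t1])
    have u0: "unitary_op (U 0)" "I1 A a = adj (U 0) ** I A a ** U 0" using U[of 0] by (auto simp: Is_def)
    have u1: "unitary_op (U 1)" "I2 A a = adj (U 1) ** I A a ** U 1" using U[of 1] by (auto simp: Is_def)
    show "norm (I1 A a) = norm (I A a)" using u0 unitary_norm by metis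
    show "norm (I2 A a) = norm (I A a)" using u1 unitary_norm by metis
    show "norm (t *\<^sub>R I1 A a + (1 - t) *\<^sub>R I2 A a) = norm (I A a)" by (simp add: dec)
  qed
  have eq1: "I1 A a = I A a" for A a
    using eq[of A a] by (simp add: dec algebra_simps flip: scaleR_add_left)
  show "I1 = I" using eq1 by blast
  show "I2 = I" using eq1 eq by (metis ext)
qed

end
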